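(* Let $\mathcal{G}$ be a finite-dimensional solvable Lie algebra with a vector space decomposition $\mathcal{G}=\bigoplus_{p\in I}V_p$ satisfying $[V_p,V_q]\subset\bigoplus_{r\in i(p,q)}V_r$ for a map $i:I\times I\to 2^I$, and let $S$ be a finite abelian semigroup with a decomposition $S=\bigcup_{p\in I}S_p$ into subsets satisfying the resonance condition $S_p\cdot S_q\subset\bigcap_{r\in i(p,q)}S_r$. Then the resonant subalgebra $\mathcal{G}_{S,R}=\bigoplus_{p\in I}S_p\otimes V_p$ of the $S$-expanded algebra $\mathcal{G}_S=S\otimes\mathcal{G}$ is solvable.
   Context: For a Lie algebra $\mathcal{G}$ with basis $\{X_i\}$, $[X_i,X_j]=C_{ij}^kX_k$, and a finite abelian semigroup $S=\{\lambda_\alpha\}$ with 2-selector $K_{\alpha\beta}^\gamma$ ($=1$ if $\lambda_\alpha\lambda_\beta=\lambda_\gamma$, else $0$), the $S$-expanded algebra $\mathcal{G}_S=S\otimes\mathcal{G}$ has basis $\lambda_\alpha\otimes X_i$ and bracket $[\lambda_\alpha\otimes X_i,\lambda_\beta\otimes X_j]=K_{\alpha\beta}^\gamma C_{ij}^k\,\lambda_\gamma\otimes X_k$. Here $S_p\cdot S_q$ denotes the set of all products of an element of $S_p$ with an element of $S_q$; under the resonance condition, $\bigoplus_p S_p\otimes V_p$ (spanned by $\lambda_{\alpha}\otimes v$ with $\lambda_\alpha\in S_p$, $v\in V_p$) is a subalgebra of $\mathcal{G}_S$, called the resonant subalgebra. *)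

theory Defs
  imports "HOL-Analysis.Finite_Cartesian_Product"
begin

definition lie_algebra :: "('v::real_vector \<Rightarrow> 'v \<Rightarrow> 'v) \<Rightarrow> bool" where
  "lie_algebra br \<longleftrightarrow>
     (\<forall>x. linear (br x)) \<and> (\<forall>y. linear (\<lambda>x. br x y)) \<and>
     (\<forall>x. br x x = 0) \<and>
     (\<forall>x y z. br x (br y z) + br y (br z x) + br z (br x y) = 0)"

definition finite_dimensional :: "'v::real_vector itself \<Rightarrow> bool" where
  "finite_dimensional _ \<longleftrightarrow> (\<exists>B::'v set. finite B \<and> span B = UNIV)"

primrec derived :: "('v::real_vector \<Rightarrow> 'v \<Rightarrow> 'v) \<Rightarrow> 'v set \<Rightarrow> nat \<Rightarrow> 'v set" where
  "derived br L 0 = L"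
| "derived br L (Suc n) = span {br x y | x y. x \<in> derived br L n \<and> y \<in> derived br L n}"

definition solvable :: "('v::real_vector \<Rightarrow> 'v \<Rightarrow> 'v) \<Rightarrow> 'v set \<Rightarrow> bool" where
  "solvable br L \<longleftrightarrow> (\<exists>n. derived br L n = {0})"

definition direct_sum_decomp :: "'i set \<Rightarrow> ('i \<Rightarrow> 'v::real_vector set) \<Rightarrow> bool" where
  "direct_sum_decomp I V \<longleftrightarrow>
     (\<forall>p\<in>I. subspace (V p)) \<and>
     span (\<Union>p\<in>I. V p) = UNIV \<and>
     (\<forall>p\<in>I. V p \<inter> span (\<Union>q\<in>I - {p}. V q) = {0})"

text \<open>The S-expanded algebra S \<otimes> G, modelled as 'v ^ 's (the element
  \<lambda>_\<alpha> \<otimes> X is axis \<alpha> X).  The bracket is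
  [\<lambda>_\<alpha> \<otimes> X, \<lambda>_\<beta> \<otimes> Y] = \<lambda>_{\<alpha>\<beta>} \<otimes> [X,Y], extended bilinearly.\<close>
definition expanded_bracket ::
  "('v::real_vector \<Rightarrow> 'v \<Rightarrow> 'v) \<Rightarrow> ('v, 's::{finite,ab_semigroup_mult}) vec \<Rightarrow> ('v, 's) vec \<Rightarrow> ('v, 's) vec" where
  "expanded_bracket br f g =
     (\<chi> \<gamma>. \<Sum>\<alpha>\<in>UNIV. \<Sum>\<beta>\<in>UNIV. if \<alpha> * \<beta> = \<gamma> then br (f $ \<alpha>) (g $ \<beta>) else 0)"

definition resonant_subalgebra ::
  "'i set \<Rightarrow> ('i \<Rightarrow> 's::{finite,ab_semigroup_mult} set) \<Rightarrow> ('i \<Rightarrow> 'v::real_vector set) \<Rightarrow> ('v, 's) vec set" where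
  "resonant_subalgebra I S V =
     span {axis \<alpha> v | \<alpha> v p. p \<in> I \<and> \<alpha> \<in> S p \<and> v \<in> V p}"

end

theory Submission
  imports Defs
begin

lemma derived_mono: "L \<subseteq> M \<Longrightarrow> derived br L n \<subseteq> derived br M n"
proof (induction n)
  case 0 then show ?case by simp
next
  case (Suc n)
  then show ?case by (auto intro!: span_mono)
qed

lemma derived_subspace_Suc: "subspace (derived br L (Suc n))"
  by (simp add: subspace_span)

lemma derived_UNIV_subspace: "subspace (derived br UNIV n)"
  by (cases n) (simp_all add: subspace_span subspace_UNIV)

lemma comp_subspace:
  assumes "subspace D"
  shows "subspace {f :: ('v::real_vector, 's::finite) vec. \<forall>a. f $ a \<in> D}"
  using assms unfolding subspace_def by auto

lemma key:
  "\<forall>f \<in> derived (expanded_bracket br) (UNIV :: ('v::real_vector, 's::{finite,ab_semigroup_mult}) vec set) n.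
     \<forall>a. f $ a \<in> derived br UNIV n"
proof (induction n)
  case 0 then show ?case by simp
next
  case (Suc n)
  let ?D = "derived br (UNIV::'v set) (Suc n)"
  have sD: "subspace ?D" by (rule derived_subspace_Suc)
  have gen: "{expanded_bracket br x y | x y. x \<in> derived (expanded_bracket br) (UNIV :: ('v, 's) vec set) n
      \<and> y \<in> derived (expanded_bracket br) UNIV n} \<subseteq> {f. \<forall>a. f $ a \<in> ?D}"
  proof clarify
    fix x y :: "('v, 's) vec" and c :: 's
    assume x: "x \<in> derived (expanded_bracket br) UNIV n" and y: "y \<in> derived (expanded_bracket br) UNIV n"
    have "\<And>a b. (if a * b = c then br (x $ a) (y $ b) else 0) \<in> ?D"
    proof -
      fix a b
      have "br (x $ a) (y $ b) \<in> ?D"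
        using Suc x y by (auto intro!: span_base)
      then show "(if a * b = c then br (x $ a) (y $ b) else 0) \<in> ?D"
        using sD by (auto simp: subspace_0)
    qed
    then show "expanded_bracket br x y $ c \<in> ?D"
      unfolding expanded_bracket_def using sD
      by (auto intro!: subspace_sum)
  qed
  have "span {expanded_bracket br x y | x y. x \<in> derived (expanded_bracket br) (UNIV :: ('v, 's) vec set) n
      \<and> y \<in> derived (expanded_bracket br) UNIV n} \<subseteq> {f. \<forall>a. f $ a \<in> ?D}"
    using span_minimal[OF gen comp_subspace[OF sD]] .
  then show ?case by auto
qed

theorem theorem2:
  fixes br :: "'v::real_vector \<Rightarrow> 'v \<Rightarrow> 'v"
    and I :: "'i set"
    and V :: "'i \<Rightarrow> 'v set"
    and ind :: "'i \<Rightarrow> 'i \<Rightarrow> 'i set"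
    and S :: "'i \<Rightarrow> ('s::{finite,ab_semigroup_mult}) set"
  assumes "lie_algebra br"
    and "finite_dimensional TYPE('v)"
    and "solvable br UNIV"
    and "direct_sum_decomp I V"
    and "\<forall>p\<in>I. \<forall>q\<in>I. ind p q \<subseteq> I"
    and "\<forall>p\<in>I. \<forall>q\<in>I. \<forall>x\<in>V p. \<forall>y\<in>V q. br x y \<in> span (\<Union>r\<in>ind p q. V r)"
    and "(\<Union>p\<in>I. S p) = UNIV"
    and "\<forall>p\<in>I. \<forall>q\<in>I. \<forall>a\<in>S p. \<forall>b\<in>S q. \<forall>r\<in>ind p q. a * b \<in> S r"
  shows "solvable (expanded_bracket br) (resonant_subalgebra I S V)"
proof -
  obtain n where n: "derived br UNIV n = {0}" using assms(3) unfolding solvable_def by blast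
  have sub: "derived (expanded_bracket br) (resonant_subalgebra I S V) n \<subseteq> {0}"
  proof
    fix f assume "f \<in> derived (expanded_bracket br) (resonant_subalgebra I S V) n"
    then have "f \<in> derived (expanded_bracket br) UNIV n"
      using derived_mono[of "resonant_subalgebra I S V" UNIV] by blast
    then have "\<forall>a. f $ a = 0" using key n by blast
    then show "f \<in> {0}" by (simp add: vec_eq_iff)
  qed
  have "0 \<in> derived (expanded_bracket br) (resonant_subalgebra I S V) n"
    by (cases n) (simp_all add: resonant_subalgebra_def span_zero)
  then show ?thesis unfolding solvable_def using sub by blast
qed

end
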